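(* Let $X',X''$ be a disjoint cover of an index set $X$, $\Pi:=\Pi X$, $\Pi':=\Pi X'$, $\Pi'':=\Pi X''$, and let $\preceq\subseteq(\Pi\times\Pi)\cup(\Pi'\times\Pi')\cup(\Pi''\times\Pi'')$ be a (generalized) Hamming relation with associated $\mu$. For $\Sigma\subseteq\Pi$ let $\Sigma':=\Sigma\upharpoonright X'$ and $\Sigma'':=\Sigma\upharpoonright X''$. (1) If $\preceq$ is smooth, then for every $\Sigma\subseteq\Pi$ (not necessarily of the form $\Sigma'\times\Sigma''$): if $\mu(\Sigma')\times\mu(\Sigma'')\subseteq\Sigma$ then $\mu(\Sigma)=\mu(\Sigma')\times\mu(\Sigma'')$. (2) For every $\Sigma\subseteq\Pi$ with $\Sigma=\Sigma'\times\Sigma''$ we have $\mu(\Sigma)=\mu(\Sigma')\times\mu(\Sigma'')$ (condition ($\mu$*1)); consequently, for the size notion "$B\subseteq A$ is big iff $\mu(A)\subseteq B\subseteq A$", condition (S*1) holds: for $\Sigma'\subseteq\Pi'$, $\Sigma''\subseteq\Pi''$, $\Delta\subseteq\Sigma'\times\Sigma''$, $\Delta$ is big in $\Sigma'\times\Sigma''$ iff there is $\Gamma'\times\Gamma''\subseteq\Delta$ with $\Gamma'$ big in $\Sigma'$ and $\Gamma''$ big in $\Sigma''$.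
   Context: $\Pi X$ is the product of the value sets over the indices in $X$. Elements $\sigma\in\Pi$ are written $\sigma=\sigma'\circ\sigma''$ (concatenation) with $\sigma'=\sigma\upharpoonright X'$, $\sigma''=\sigma\upharpoonright X''$. $\preceq$ is a (generalized) Hamming relation iff $\preceq$ is reflexive and for all $\sigma,\tau\in\Pi$: $\sigma\preceq\tau\iff(\sigma'\preceq\tau'$ and $\sigma''\preceq\tau'')$. $x\prec y$ means $x\preceq y$ and $x\neq y$. For a set $A$ (subset of $\Pi$, $\Pi'$ or $\Pi''$), $\mu(A):=\{x\in A:\neg\exists x'\in A.\,x'\prec x\}$. $\preceq$ is smooth iff for every such $A$ and every $x\in A-\mu(A)$ there is $x'\in\mu(A)$ with $x'\prec x$. *)

theory Defs
  imports "HOL-Library.FuncSet"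
begin

text \<open>Elements of the product \<Pi>X of value sets V i (i \<in> X) are modelled as
  extensional functions, i.e. elements of PiE X V.  A single relation R on
  functions represents \<preceq> on \<Pi> \<union> \<Pi>' \<union> \<Pi>''.\<close>

definition proj :: "'i set \<Rightarrow> ('i \<Rightarrow> 'v) set \<Rightarrow> ('i \<Rightarrow> 'v) set" where
  "proj Y S = (\<lambda>\<sigma>. restrict \<sigma> Y) ` S"

definition concat :: "'i set \<Rightarrow> ('i \<Rightarrow> 'v) \<Rightarrow> ('i \<Rightarrow> 'v) \<Rightarrow> ('i \<Rightarrow> 'v)" where
  "concat X1 a b = (\<lambda>i. if i \<in> X1 then a i else b i)"

definition cprod :: "'i set \<Rightarrow> ('i \<Rightarrow> 'v) set \<Rightarrow> ('i \<Rightarrow> 'v) set \<Rightarrow> ('i \<Rightarrow> 'v) set" where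
  "cprod X1 A B = {concat X1 a b | a b. a \<in> A \<and> b \<in> B}"

definition mu :: "('a \<Rightarrow> 'a \<Rightarrow> bool) \<Rightarrow> 'a set \<Rightarrow> 'a set" where
  "mu R A = {x \<in> A. \<not> (\<exists>x' \<in> A. R x' x \<and> x' \<noteq> x)}"

definition hamming ::
  "(('i \<Rightarrow> 'v) \<Rightarrow> ('i \<Rightarrow> 'v) \<Rightarrow> bool) \<Rightarrow> ('i \<Rightarrow> 'v set) \<Rightarrow> 'i set \<Rightarrow> 'i set \<Rightarrow> 'i set \<Rightarrow> bool" where
  "hamming R V X X1 X2 \<longleftrightarrow>
     (\<forall>x \<in> PiE X V \<union> PiE X1 V \<union> PiE X2 V. R x x) \<and>
     (\<forall>\<sigma> \<in> PiE X V. \<forall>\<tau> \<in> PiE X V.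
        R \<sigma> \<tau> \<longleftrightarrow> (R (restrict \<sigma> X1) (restrict \<tau> X1) \<and> R (restrict \<sigma> X2) (restrict \<tau> X2)))"

definition smooth ::
  "(('i \<Rightarrow> 'v) \<Rightarrow> ('i \<Rightarrow> 'v) \<Rightarrow> bool) \<Rightarrow> ('i \<Rightarrow> 'v set) \<Rightarrow> 'i set \<Rightarrow> 'i set \<Rightarrow> 'i set \<Rightarrow> bool" where
  "smooth R V X X1 X2 \<longleftrightarrow>
     (\<forall>A. (A \<subseteq> PiE X V \<or> A \<subseteq> PiE X1 V \<or> A \<subseteq> PiE X2 V) \<longrightarrow>
        (\<forall>x \<in> A - mu R A. \<exists>x' \<in> mu R A. R x' x \<and> x' \<noteq> x))"

definition big :: "('a \<Rightarrow> 'a \<Rightarrow> bool) \<Rightarrow> 'a set \<Rightarrow> 'a set \<Rightarrow> bool" where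
  "big R B A \<longleftrightarrow> mu R A \<subseteq> B \<and> B \<subseteq> A"

end

theory Submission
  imports Defs
begin

lemma concat_PiE:
  assumes "X1 \<union> X2 = X" "X1 \<inter> X2 = {}" "a \<in> PiE X1 V" "b \<in> PiE X2 V"
  shows "concat X1 a b \<in> PiE X V"
  using assms unfolding concat_def PiE_def Pi_def extensional_def by auto

lemma restr1:
  assumes "a \<in> PiE X1 V"
  shows "restrict (concat X1 a b) X1 = a"
  using assms unfolding concat_def PiE_def extensional_def restrict_def by auto

lemma restr2:
  assumes "X1 \<inter> X2 = {}" "b \<in> PiE X2 V"
  shows "restrict (concat X1 a b) X2 = b"
  using assms unfolding concat_def PiE_def extensional_def restrict_def by (auto simp: fun_eq_iff)

lemma concat_restr:
  assumes "X1 \<union> X2 = X" "\<sigma> \<in> PiE X V"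
  shows "concat X1 (restrict \<sigma> X1) (restrict \<sigma> X2) = \<sigma>"
  using assms unfolding concat_def PiE_def extensional_def restrict_def by (auto simp: fun_eq_iff)

lemma restr_PiE:
  assumes "Y \<subseteq> X" "\<sigma> \<in> PiE X V"
  shows "restrict \<sigma> Y \<in> PiE Y V"
  using assms by auto

lemma mu_sub: "mu R A \<subseteq> A" unfolding mu_def by auto

lemma core:
  assumes cover: "X1 \<union> X2 = X" "X1 \<inter> X2 = {}"
    and ham: "hamming R V X X1 X2"
    and A: "A \<subseteq> PiE X1 V" and B: "B \<subseteq> PiE X2 V"
  shows "mu R (cprod X1 A B) = cprod X1 (mu R A) (mu R B)"
proof -
  have refl: "\<And>x. x \<in> PiE X V \<union> PiE X1 V \<union> PiE X2 V \<Longrightarrow> R x x"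
    and hm: "\<And>\<sigma> \<tau>. \<sigma> \<in> PiE X V \<Longrightarrow> \<tau> \<in> PiE X V \<Longrightarrow>
        R \<sigma> \<tau> \<longleftrightarrow> (R (restrict \<sigma> X1) (restrict \<tau> X1) \<and> R (restrict \<sigma> X2) (restrict \<tau> X2))"
    using ham unfolding hamming_def by auto
  show ?thesis
  proof (rule set_eqI, rule iffI)
    fix s assume s: "s \<in> mu R (cprod X1 A B)"
    then obtain a b where ab: "s = concat X1 a b" "a \<in> A" "b \<in> B"
      unfolding mu_def cprod_def by auto
    have aP: "a \<in> PiE X1 V" and bP: "b \<in> PiE X2 V" using ab A B by auto
    have sP: "s \<in> PiE X V" using concat_PiE[OF cover aP bP] ab by simp
    have "a \<in> mu R A"
    proof (rule ccontr)
      assume "a \<notin> mu R A"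
      then obtain a' where a': "a' \<in> A" "R a' a" "a' \<noteq> a" using ab unfolding mu_def by auto
      have a'P: "a' \<in> PiE X1 V" using a' A by auto
      let ?t = "concat X1 a' b"
      have tP: "?t \<in> PiE X V" using concat_PiE[OF cover a'P bP] .
      have "R ?t s" using hm[OF tP sP] ab a' restr1[OF a'P] restr1[OF aP]
          restr2[OF cover(2) bP] refl bP by auto
      moreover have "?t \<noteq> s" using ab restr1[OF a'P, of b] restr1[OF aP, of b] a' by metis
      moreover have "?t \<in> cprod X1 A B" using a' ab unfolding cprod_def by auto
      ultimately show False using s unfolding mu_def by auto
    qed
    moreover have "b \<in> mu R B"
    proof (rule ccontr)
      assume "b \<notin> mu R B"
      then obtain b' where b': "b' \<in> B" "R b' b" "b' \<noteq> b" using ab unfolding mu_def by auto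
      have b'P: "b' \<in> PiE X2 V" using b' B by auto
      let ?t = "concat X1 a b'"
      have tP: "?t \<in> PiE X V" using concat_PiE[OF cover aP b'P] .
      have "R ?t s" using hm[OF tP sP] ab b' restr1[OF aP]
          restr2[OF cover(2) bP] restr2[OF cover(2) b'P] refl aP by auto
      moreover have "?t \<noteq> s" using ab restr2[OF cover(2) b'P, of a] restr2[OF cover(2) bP, of a] b' by metis
      moreover have "?t \<in> cprod X1 A B" using b' ab unfolding cprod_def by auto
      ultimately show False using s unfolding mu_def by auto
    qed
    ultimately show "s \<in> cprod X1 (mu R A) (mu R B)" using ab unfolding cprod_def by auto
  next
    fix s assume s: "s \<in> cprod X1 (mu R A) (mu R B)"
    then obtain a b where ab: "s = concat X1 a b" "a \<in> mu R A" "b \<in> mu R B"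
      unfolding cprod_def by auto
    have aA: "a \<in> A" and bB: "b \<in> B" using ab by (auto simp: mu_def)
    have aP: "a \<in> PiE X1 V" and bP: "b \<in> PiE X2 V" using aA bB A B by auto
    have sP: "s \<in> PiE X V" using concat_PiE[OF cover aP bP] ab by simp
    have sin: "s \<in> cprod X1 A B" using ab aA bB unfolding cprod_def by auto
    have "\<not> (\<exists>t \<in> cprod X1 A B. R t s \<and> t \<noteq> s)"
    proof
      assume "\<exists>t \<in> cprod X1 A B. R t s \<and> t \<noteq> s"
      then obtain a' b' where t: "a' \<in> A" "b' \<in> B" "R (concat X1 a' b') s" "concat X1 a' b' \<noteq> s"
        unfolding cprod_def by auto
      have a'P: "a' \<in> PiE X1 V" and b'P: "b' \<in> PiE X2 V" using t A B by auto
      have tP: "concat X1 a' b' \<in> PiE X V" using concat_PiE[OF cover a'P b'P] .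
      have "R a' a" "R b' b" using hm[OF tP sP] t(3) ab restr1[OF aP] restr1[OF a'P]
          restr2[OF cover(2) bP] restr2[OF cover(2) b'P] by auto
      hence "a' = a" "b' = b" using ab t unfolding mu_def by auto
      thus False using t ab by auto
    qed
    thus "s \<in> mu R (cprod X1 A B)" using sin unfolding mu_def by auto
  qed
qed

lemma proj_sub:
  assumes "Y \<subseteq> X" "S \<subseteq> PiE X V" shows "proj Y S \<subseteq> PiE Y V"
  using assms unfolding proj_def by (force simp: PiE_def Pi_def extensional_def)

theorem fact4p9:
  fixes R :: "('i \<Rightarrow> 'v) \<Rightarrow> ('i \<Rightarrow> 'v) \<Rightarrow> bool"
    and V :: "'i \<Rightarrow> 'v set" and X X1 X2 :: "'i set"
  assumes cover: "X1 \<union> X2 = X" "X1 \<inter> X2 = {}"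
    and dom: "\<And>x y. R x y \<Longrightarrow> (x \<in> PiE X V \<and> y \<in> PiE X V) \<or> (x \<in> PiE X1 V \<and> y \<in> PiE X1 V)
                                  \<or> (x \<in> PiE X2 V \<and> y \<in> PiE X2 V)"
    and ham: "hamming R V X X1 X2"
  shows "(smooth R V X X1 X2 \<longrightarrow>
            (\<forall>\<Sigma> \<subseteq> PiE X V.
               cprod X1 (mu R (proj X1 \<Sigma>)) (mu R (proj X2 \<Sigma>)) \<subseteq> \<Sigma> \<longrightarrow>
               mu R \<Sigma> = cprod X1 (mu R (proj X1 \<Sigma>)) (mu R (proj X2 \<Sigma>))))
       \<and> (\<forall>\<Sigma> \<subseteq> PiE X V. \<Sigma> = cprod X1 (proj X1 \<Sigma>) (proj X2 \<Sigma>) \<longrightarrow>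
               mu R \<Sigma> = cprod X1 (mu R (proj X1 \<Sigma>)) (mu R (proj X2 \<Sigma>)))
       \<and> (\<forall>\<Sigma>1 \<subseteq> PiE X1 V. \<forall>\<Sigma>2 \<subseteq> PiE X2 V. \<forall>\<Delta> \<subseteq> cprod X1 \<Sigma>1 \<Sigma>2.
               big R \<Delta> (cprod X1 \<Sigma>1 \<Sigma>2) \<longleftrightarrow>
               (\<exists>\<Gamma>1 \<Gamma>2. cprod X1 \<Gamma>1 \<Gamma>2 \<subseteq> \<Delta> \<and> big R \<Gamma>1 \<Sigma>1 \<and> big R \<Gamma>2 \<Sigma>2))"
proof -
  have X1X: "X1 \<subseteq> X" and X2X: "X2 \<subseteq> X" using cover by auto
  have refl: "\<And>x. x \<in> PiE X V \<union> PiE X1 V \<union> PiE X2 V \<Longrightarrow> R x x"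
    and hm: "\<And>\<sigma> \<tau>. \<sigma> \<in> PiE X V \<Longrightarrow> \<tau> \<in> PiE X V \<Longrightarrow>
        R \<sigma> \<tau> \<longleftrightarrow> (R (restrict \<sigma> X1) (restrict \<tau> X1) \<and> R (restrict \<sigma> X2) (restrict \<tau> X2))"
    using ham unfolding hamming_def by auto
  have P1: "\<forall>\<Sigma> \<subseteq> PiE X V.
               cprod X1 (mu R (proj X1 \<Sigma>)) (mu R (proj X2 \<Sigma>)) \<subseteq> \<Sigma> \<longrightarrow>
               mu R \<Sigma> = cprod X1 (mu R (proj X1 \<Sigma>)) (mu R (proj X2 \<Sigma>))"
    if sm: "smooth R V X X1 X2"
  proof (intro allI impI)
    fix S assume SP: "S \<subseteq> PiE X V"
      and sub: "cprod X1 (mu R (proj X1 S)) (mu R (proj X2 S)) \<subseteq> S"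
    have S1: "proj X1 S \<subseteq> PiE X1 V" and S2: "proj X2 S \<subseteq> PiE X2 V"
      using proj_sub[OF X1X SP] proj_sub[OF X2X SP] .
    have smA: "\<And>A x. A \<subseteq> PiE X1 V \<or> A \<subseteq> PiE X2 V \<Longrightarrow> x \<in> A - mu R A \<Longrightarrow>
        \<exists>x' \<in> mu R A. R x' x \<and> x' \<noteq> x"
      using sm unfolding smooth_def by blast
    show "mu R S = cprod X1 (mu R (proj X1 S)) (mu R (proj X2 S))"
    proof (rule set_eqI, rule iffI)
      fix s assume s: "s \<in> mu R S"
      hence sS: "s \<in> S" and sP: "s \<in> PiE X V" using SP unfolding mu_def by auto
      define a where "a = restrict s X1"
      define b where "b = restrict s X2"
      have aS: "a \<in> proj X1 S" and bS: "b \<in> proj X2 S" using sS unfolding a_def b_def proj_def by auto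
      have aP: "a \<in> PiE X1 V" and bP: "b \<in> PiE X2 V" using aS bS S1 S2 by auto
      have sab: "s = concat X1 a b" using concat_restr[OF cover(1) sP] unfolding a_def b_def by simp
      obtain a0 where a0: "a0 \<in> mu R (proj X1 S)" "R a0 a" "a0 \<noteq> a \<longleftrightarrow> a \<notin> mu R (proj X1 S)"
      proof (cases "a \<in> mu R (proj X1 S)")
        case True thus ?thesis using that refl aP by blast
      next
        case False
        have "a \<in> proj X1 S - mu R (proj X1 S)" using False aS by blast
        then obtain x' where "x' \<in> mu R (proj X1 S)" "R x' a" "x' \<noteq> a" using smA[of "proj X1 S" a] S1 by blast
        thus ?thesis using that False by blast
      qed
      obtain b0 where b0: "b0 \<in> mu R (proj X2 S)" "R b0 b" "b0 \<noteq> b \<longleftrightarrow> b \<notin> mu R (proj X2 S)"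
      proof (cases "b \<in> mu R (proj X2 S)")
        case True thus ?thesis using that refl bP by blast
      next
        case False
        have "b \<in> proj X2 S - mu R (proj X2 S)" using False bS by blast
        then obtain x' where "x' \<in> mu R (proj X2 S)" "R x' b" "x' \<noteq> b" using smA[of "proj X2 S" b] S2 by blast
        thus ?thesis using that False by blast
      qed
      have a0P: "a0 \<in> PiE X1 V" and b0P: "b0 \<in> PiE X2 V" using a0(1) b0(1) S1 S2 by (auto simp: mu_def)
      let ?t = "concat X1 a0 b0"
      have tS: "?t \<in> S" using sub a0 b0 unfolding cprod_def by auto
      have tP: "?t \<in> PiE X V" using concat_PiE[OF cover a0P b0P] .
      have "R ?t s" using hm[OF tP sP] sab a0 b0 restr1[OF a0P] restr1[OF aP]
          restr2[OF cover(2) bP] restr2[OF cover(2) b0P] by auto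
      hence "?t = s" using s tS unfolding mu_def by auto
      hence "a0 = a" "b0 = b" using sab restr1[OF a0P, of b0] restr1[OF aP, of b]
          restr2[OF cover(2) bP, of a] restr2[OF cover(2) b0P, of a0] by metis+
      hence "a \<in> mu R (proj X1 S)" "b \<in> mu R (proj X2 S)" using a0 b0 by auto
      thus "s \<in> cprod X1 (mu R (proj X1 S)) (mu R (proj X2 S))" using sab unfolding cprod_def by auto
    next
      fix s assume s: "s \<in> cprod X1 (mu R (proj X1 S)) (mu R (proj X2 S))"
      hence sS: "s \<in> S" using sub by auto
      hence sP: "s \<in> PiE X V" using SP by auto
      obtain a b where ab: "s = concat X1 a b" "a \<in> mu R (proj X1 S)" "b \<in> mu R (proj X2 S)"
        using s unfolding cprod_def by auto
      have aP: "a \<in> PiE X1 V" and bP: "b \<in> PiE X2 V" using ab S1 S2 by (auto simp: mu_def)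
      have "\<not> (\<exists>t \<in> S. R t s \<and> t \<noteq> s)"
      proof
        assume "\<exists>t \<in> S. R t s \<and> t \<noteq> s"
        then obtain t where t: "t \<in> S" "R t s" "t \<noteq> s" by auto
        have tP: "t \<in> PiE X V" using t SP by auto
        have t1: "restrict t X1 \<in> proj X1 S" and t2: "restrict t X2 \<in> proj X2 S"
          using t unfolding proj_def by auto
        have "R (restrict t X1) a" "R (restrict t X2) b" using hm[OF tP sP] t ab restr1[OF aP]
          restr2[OF cover(2) bP] by auto
        hence "restrict t X1 = a" "restrict t X2 = b" using ab t1 t2 unfolding mu_def by auto
        hence "t = s" using concat_restr[OF cover(1) tP] ab by simp
        thus False using t by simp
      qed
      thus "s \<in> mu R S" using sS unfolding mu_def by auto
    qed
  qed
  have P2: "\<forall>\<Sigma> \<subseteq> PiE X V. \<Sigma> = cprod X1 (proj X1 \<Sigma>) (proj X2 \<Sigma>) \<longrightarrow>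
               mu R \<Sigma> = cprod X1 (mu R (proj X1 \<Sigma>)) (mu R (proj X2 \<Sigma>))"
  proof (intro allI impI)
    fix S assume SP: "S \<subseteq> PiE X V" and eq: "S = cprod X1 (proj X1 S) (proj X2 S)"
    have "mu R (cprod X1 (proj X1 S) (proj X2 S)) = cprod X1 (mu R (proj X1 S)) (mu R (proj X2 S))"
      using core[OF cover ham proj_sub[OF X1X SP] proj_sub[OF X2X SP]] .
    thus "mu R S = cprod X1 (mu R (proj X1 S)) (mu R (proj X2 S))" using eq by simp
  qed
  have P3: "\<forall>\<Sigma>1 \<subseteq> PiE X1 V. \<forall>\<Sigma>2 \<subseteq> PiE X2 V. \<forall>\<Delta> \<subseteq> cprod X1 \<Sigma>1 \<Sigma>2.
               big R \<Delta> (cprod X1 \<Sigma>1 \<Sigma>2) \<longleftrightarrow>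
               (\<exists>\<Gamma>1 \<Gamma>2. cprod X1 \<Gamma>1 \<Gamma>2 \<subseteq> \<Delta> \<and> big R \<Gamma>1 \<Sigma>1 \<and> big R \<Gamma>2 \<Sigma>2)"
  proof (intro allI impI)
    fix S1 S2 D assume S1: "S1 \<subseteq> PiE X1 V" and S2: "S2 \<subseteq> PiE X2 V" and D: "D \<subseteq> cprod X1 S1 S2"
    have c: "mu R (cprod X1 S1 S2) = cprod X1 (mu R S1) (mu R S2)" using core[OF cover ham S1 S2] .
    have mono: "cprod X1 A B \<subseteq> cprod X1 A' B'" if "A \<subseteq> A'" "B \<subseteq> B'" for A A' B B'
      using that unfolding cprod_def by blast
    show "big R D (cprod X1 S1 S2) \<longleftrightarrow>
               (\<exists>\<Gamma>1 \<Gamma>2. cprod X1 \<Gamma>1 \<Gamma>2 \<subseteq> D \<and> big R \<Gamma>1 S1 \<and> big R \<Gamma>2 S2)"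
    proof
      assume "big R D (cprod X1 S1 S2)"
      hence "cprod X1 (mu R S1) (mu R S2) \<subseteq> D" using c unfolding big_def by auto
      then show "\<exists>\<Gamma>1 \<Gamma>2. cprod X1 \<Gamma>1 \<Gamma>2 \<subseteq> D \<and> big R \<Gamma>1 S1 \<and> big R \<Gamma>2 S2"
      proof (intro exI conjI)
        show "cprod X1 (mu R S1) (mu R S2) \<subseteq> D" by fact
        show "big R (mu R S1) S1" "big R (mu R S2) S2" by (auto simp: big_def mu_def)
      qed
    next
      assume "\<exists>\<Gamma>1 \<Gamma>2. cprod X1 \<Gamma>1 \<Gamma>2 \<subseteq> D \<and> big R \<Gamma>1 S1 \<and> big R \<Gamma>2 S2"
      then obtain G1 G2 where G: "cprod X1 G1 G2 \<subseteq> D" "mu R S1 \<subseteq> G1" "mu R S2 \<subseteq> G2"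
        unfolding big_def by auto
      have "mu R (cprod X1 S1 S2) \<subseteq> D" using c mono[OF G(2,3)] G(1) by auto
      thus "big R D (cprod X1 S1 S2)" using D unfolding big_def by auto
    qed
  qed
  show ?thesis using P1 P2 P3 by blast
qed

end
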